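(* Let $\mathcal{T}$ be a compact interval, $\boldsymbol{\phi}=(\phi_1,\dots,\phi_m)'$ linearly independent functions in $L^2(\mathcal{T})$, and let $\mathbf{X}(t)=\mathbf{A}'\boldsymbol{\phi}(t)$ be a rank-$M$ ($M=mp$) $p$-variate process with separable covariance $\mathbf{K}(s,t)=\boldsymbol{\Sigma}^{\mathrm{row}}\kappa(s,t)$, random coefficient matrix $\mathbf{A}=(\mathbf{a}_1,\dots,\mathbf{a}_p)\in\mathbb{R}^{m\times p}$, mean $\boldsymbol{\mu}(t)=\mathbf{M}_{\mathbf{A}}'\boldsymbol{\phi}(t)$ with $\mathbf{M}_{\mathbf{A}}=(\mathbf{m}_{\mathbf{A},1},\dots,\mathbf{m}_{\mathbf{A},p})=E\mathbf{A}$, and $\kappa(s,t)=\boldsymbol{\phi}'(s)\boldsymbol{\Sigma}^{\mathrm{col}}\boldsymbol{\phi}(t)$ with $\boldsymbol{\Sigma}^{\mathrm{col}}$ positive definite. Let $(\lambda^{\mathrm{row}}_j,\mathbf{v}^{\mathrm{row}}_j)$, $j=1,\dots,p$, be the eigenpairs of $\boldsymbol{\Sigma}^{\mathrm{row}}$ and $v^{\mathrm{row}}_{j,k}=\mathbf{e}_k'\mathbf{v}^{\mathrm{row}}_j$. Then for each $k\in\{1,\dots,p\}$, $$\theta_k(\mathbf{X},\boldsymbol{\mu};\mathbf{K},M)=\sum_{j=1}^p\frac{1}{\lambda^{\mathrm{row}}_j}v^{\mathrm{row}}_{j,k}(\mathbf{a}_k-\mathbf{m}_{\mathbf{A},k}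)'(\boldsymbol{\Sigma}^{\mathrm{col}})^{-1}(\mathbf{A}-\mathbf{M}_{\mathbf{A}})'\mathbf{v}^{\mathrm{row}}_j.$$
   Context: $\boldsymbol{\Sigma}^{\mathrm{row}}$ is $p\times p$ symmetric positive definite. The covariance operator $\mathcal{C}\mathbf{x}(s)=\int\mathbf{K}(s,t)\mathbf{x}(t)dt$ on $L^2(\mathcal{T})^p$ (inner product $\langle\mathbf{x},\mathbf{y}\rangle=\sum_j\int_{\mathcal{T}}x_jy_j$) has orthonormal eigenfunctions $\boldsymbol{\psi}_i$ and nonincreasing eigenvalues $\pi_i$; $\mathrm{fMMD}^2(\mathbf{Y},\boldsymbol{\mu};\mathbf{K},M)=\sum_{i=1}^M\pi_i^{-1}\langle\mathbf{Y}-\boldsymbol{\mu},\boldsymbol{\psi}_i\rangle^2$. With $P=\{1,\dots,p\}$, $\hat X^S_j=X_j$ if $j\in S$ and $\hat X^S_j=\mu_j$ otherwise, the coordinate Shapley contribution is $\theta_k(\mathbf{X},\boldsymbol{\mu};\mathbf{K},M)=\sum_{S\subseteq P\setminus\{k\}}\frac{|S|!(p-|S|-1)!}{p!}[\mathrm{fMMD}^2(\hat{\mathbf{X}}^{S\cup\{k\}},\boldsymbol{\mu};\mathbf{K},M)-\mathrm{fMMD}^2(\hat{\mathbf{X}}^S,\boldsymbol{\mu};\mathbf{K},M)]$. *)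

theory Defs
  imports "HOL-Analysis.Analysis" "HOL-Probability.Probability"
begin

text \<open>Functions on T = {a..b} with values in R^p are represented as
  'p \<Rightarrow> real \<Rightarrow> real (component j, time t).\<close>

definition L2fun :: "real \<Rightarrow> real \<Rightarrow> (real \<Rightarrow> real) \<Rightarrow> bool" where
  "L2fun a b f \<longleftrightarrow> f \<in> borel_measurable (lebesgue_on {a..b})
      \<and> integrable (lebesgue_on {a..b}) (\<lambda>t. (f t)\<^sup>2)"

definition L2vec :: "real \<Rightarrow> real \<Rightarrow> ('p::finite \<Rightarrow> real \<Rightarrow> real) \<Rightarrow> bool" where
  "L2vec a b x \<longleftrightarrow> (\<forall>j. L2fun a b (x j))"

definition ip :: "real \<Rightarrow> real \<Rightarrow> ('p::finite \<Rightarrow> real \<Rightarrow> real) \<Rightarrow> ('p \<Rightarrow> real \<Rightarrow> real) \<Rightarrow> real" where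
  "ip a b x y = (\<Sum>j\<in>UNIV. integral\<^sup>L (lebesgue_on {a..b}) (\<lambda>t. x j t * y j t))"

definition covop :: "real \<Rightarrow> real \<Rightarrow> (real \<Rightarrow> real \<Rightarrow> real^'p^'p) \<Rightarrow> ('p::finite \<Rightarrow> real \<Rightarrow> real)
    \<Rightarrow> ('p \<Rightarrow> real \<Rightarrow> real)" where
  "covop a b K x = (\<lambda>j s. \<Sum>l\<in>UNIV. integral\<^sup>L (lebesgue_on {a..b}) (\<lambda>t. K s t $ j $ l * x l t))"

definition is_eigensystem :: "real \<Rightarrow> real \<Rightarrow> (real \<Rightarrow> real \<Rightarrow> real^'p^'p)
    \<Rightarrow> (nat \<Rightarrow> 'p::finite \<Rightarrow> real \<Rightarrow> real) \<Rightarrow> (nat \<Rightarrow> real) \<Rightarrow> bool" where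
  "is_eigensystem a b K \<psi> \<pi> \<longleftrightarrow>
     (\<forall>i\<ge>1. L2vec a b (\<psi> i))
   \<and> (\<forall>i\<ge>1. \<forall>i'\<ge>1. ip a b (\<psi> i) (\<psi> i') = (if i = i' then 1 else 0))
   \<and> (\<forall>i\<ge>1. \<forall>j. \<forall>s\<in>{a..b}. covop a b K (\<psi> i) j s = \<pi> i * \<psi> i j s)
   \<and> (\<forall>i\<ge>1. \<forall>i'\<ge>i. \<pi> i' \<le> \<pi> i)
   \<and> (\<forall>x. L2vec a b x \<and> (\<forall>i\<ge>1. ip a b x (\<psi> i) = 0) \<longrightarrow> ip a b x x = 0)"

definition fMMD2 :: "real \<Rightarrow> real \<Rightarrow> (nat \<Rightarrow> 'p::finite \<Rightarrow> real \<Rightarrow> real) \<Rightarrow> (nat \<Rightarrow> real) \<Rightarrow> nat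
    \<Rightarrow> ('p \<Rightarrow> real \<Rightarrow> real) \<Rightarrow> ('p \<Rightarrow> real \<Rightarrow> real) \<Rightarrow> real" where
  "fMMD2 a b \<psi> \<pi> M Y \<mu> = (\<Sum>i=1..M. inverse (\<pi> i) * (ip a b (\<lambda>j t. Y j t - \<mu> j t) (\<psi> i))\<^sup>2)"

definition hatX :: "'p set \<Rightarrow> ('p \<Rightarrow> real \<Rightarrow> real) \<Rightarrow> ('p \<Rightarrow> real \<Rightarrow> real) \<Rightarrow> ('p \<Rightarrow> real \<Rightarrow> real)" where
  "hatX S X \<mu> = (\<lambda>j. if j \<in> S then X j else \<mu> j)"

definition shapley :: "real \<Rightarrow> real \<Rightarrow> (nat \<Rightarrow> 'p::finite \<Rightarrow> real \<Rightarrow> real) \<Rightarrow> (nat \<Rightarrow> real) \<Rightarrow> nat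
    \<Rightarrow> 'p \<Rightarrow> ('p \<Rightarrow> real \<Rightarrow> real) \<Rightarrow> ('p \<Rightarrow> real \<Rightarrow> real) \<Rightarrow> real" where
  "shapley a b \<psi> \<pi> M k X \<mu> =
     (\<Sum>S\<in>Pow (UNIV - {k}).
        (fact (card S) * fact (CARD('p) - card S - 1) / fact CARD('p)) *
        (fMMD2 a b \<psi> \<pi> M (hatX (insert k S) X \<mu>) \<mu> - fMMD2 a b \<psi> \<pi> M (hatX S X \<mu>) \<mu>))"

end

theory Submission
  imports Defs
begin


lemma L2fun_meas: "L2fun a b f \<Longrightarrow> f \<in> borel_measurable (lebesgue_on {a..b})"
  unfolding L2fun_def by simp

lemma L2fun_sq: "L2fun a b f \<Longrightarrow> integrable (lebesgue_on {a..b}) (\<lambda>t. (f t)\<^sup>2)"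
  unfolding L2fun_def by simp

lemma L2_mult_integrable:
  assumes f: "L2fun a b f" and g: "L2fun a b g"
  shows "integrable (lebesgue_on {a..b}) (\<lambda>t. f t * g t)"
proof (rule Bochner_Integration.integrable_bound[of _ "\<lambda>t. (f t)\<^sup>2 + (g t)\<^sup>2"])
  show "integrable (lebesgue_on {a..b}) (\<lambda>t. (f t)\<^sup>2 + (g t)\<^sup>2)"
    using L2fun_sq[OF f] L2fun_sq[OF g] by (rule Bochner_Integration.integrable_add)
  show "(\<lambda>t. f t * g t) \<in> borel_measurable (lebesgue_on {a..b})"
    using L2fun_meas[OF f] L2fun_meas[OF g] by (rule borel_measurable_times)
  show "AE x in lebesgue_on {a..b}. norm (f x * g x) \<le> norm ((f x)\<^sup>2 + (g x)\<^sup>2)"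
  proof (rule AE_I2)
    fix x
    have h: "2 * \<bar>f x\<bar> * \<bar>g x\<bar> \<le> \<bar>f x\<bar>\<^sup>2 + \<bar>g x\<bar>\<^sup>2" by (rule sum_squares_bound)
    have n1: "norm (f x * g x) = \<bar>f x\<bar> * \<bar>g x\<bar>" by (simp add: abs_mult)
    have n2: "norm ((f x)\<^sup>2 + (g x)\<^sup>2) = \<bar>f x\<bar>\<^sup>2 + \<bar>g x\<bar>\<^sup>2" by simp
    have "0 \<le> \<bar>f x\<bar> * \<bar>g x\<bar>" by simp
    then show "norm (f x * g x) \<le> norm ((f x)\<^sup>2 + (g x)\<^sup>2)" unfolding n1 n2 using h by linarith
  qed
qed

lemma L2fun_add:
  assumes f: "L2fun a b f" and g: "L2fun a b g"
  shows "L2fun a b (\<lambda>t. f t + g t)"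
  unfolding L2fun_def
proof
  show "(\<lambda>t. f t + g t) \<in> borel_measurable (lebesgue_on {a..b})"
    using L2fun_meas[OF f] L2fun_meas[OF g] by (rule borel_measurable_add)
  have "integrable (lebesgue_on {a..b}) (\<lambda>t. (f t)\<^sup>2 + (g t)\<^sup>2 + 2 * (f t * g t))"
    using L2fun_sq[OF f] L2fun_sq[OF g] L2_mult_integrable[OF f g] by simp
  then show "integrable (lebesgue_on {a..b}) (\<lambda>t. (f t + g t)\<^sup>2)"
    by (simp add: power2_sum mult.assoc)
qed

lemma L2fun_cmult:
  assumes f: "L2fun a b f"
  shows "L2fun a b (\<lambda>t. c * f t)"
  unfolding L2fun_def
proof
  show "(\<lambda>t. c * f t) \<in> borel_measurable (lebesgue_on {a..b})"
    using L2fun_meas[OF f] by simp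
  show "integrable (lebesgue_on {a..b}) (\<lambda>t. (c * f t)\<^sup>2)"
    using L2fun_sq[OF f] by (simp add: power_mult_distrib)
qed

lemma L2fun_zero: "L2fun a b (\<lambda>t. 0)"
  unfolding L2fun_def by simp

lemma L2fun_sum:
  assumes "\<And>i. i \<in> I \<Longrightarrow> L2fun a b (f i)"
  shows "L2fun a b (\<lambda>t. \<Sum>i\<in>I. f i t)"
  using assms
proof (induction I rule: infinite_finite_induct)
  case (infinite A) then show ?case by (simp add: L2fun_zero)
next
  case empty then show ?case by (simp add: L2fun_zero)
next
  case (insert x F)
  then show ?case by (simp add: L2fun_add)
qed

lemma L2fun_diff:
  assumes f: "L2fun a b f" and g: "L2fun a b g"
  shows "L2fun a b (\<lambda>t. f t - g t)"
  using L2fun_add[OF f L2fun_cmult[OF g, of "-1"]] by simp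




lemma inner_mat: "(X::real^'p^'m) \<bullet> Y = (\<Sum>l\<in>UNIV. \<Sum>j\<in>UNIV. X$l$j * Y$l$j)"
  by (simp add: inner_vec_def)

lemma sum3_swap:
  fixes f :: "'a::finite \<Rightarrow> 'b::finite \<Rightarrow> 'c::finite \<Rightarrow> real"
  shows "(\<Sum>l\<in>UNIV. \<Sum>j\<in>UNIV. \<Sum>q\<in>UNIV. f l j q) = (\<Sum>q\<in>UNIV. \<Sum>j\<in>UNIV. \<Sum>l\<in>UNIV. f l j q)"
proof -
  have "(\<Sum>l\<in>UNIV. \<Sum>j\<in>UNIV. \<Sum>q\<in>UNIV. f l j q) = (\<Sum>l\<in>UNIV. \<Sum>q\<in>UNIV. \<Sum>j\<in>UNIV. f l j q)"
    by (rule sum.cong[OF refl], rule sum.swap)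
  also have "\<dots> = (\<Sum>q\<in>UNIV. \<Sum>l\<in>UNIV. \<Sum>j\<in>UNIV. f l j q)"
    by (rule sum.swap)
  also have "\<dots> = (\<Sum>q\<in>UNIV. \<Sum>j\<in>UNIV. \<Sum>l\<in>UNIV. f l j q)"
    by (rule sum.cong[OF refl], rule sum.swap)
  finally show ?thesis .
qed

lemma inner_mmul_left:
  fixes A :: "real^'k^'m" and B :: "real^'p^'k" and C :: "real^'p^'m"
  shows "(A ** B) \<bullet> C = B \<bullet> (transpose A ** C)"
proof -
  have "(A ** B) \<bullet> C = (\<Sum>l\<in>UNIV. \<Sum>j\<in>UNIV. \<Sum>q\<in>UNIV. A$l$q * B$q$j * C$l$j)"
    by (simp add: inner_mat matrix_matrix_mult_def sum_distrib_right)
  also have "\<dots> = (\<Sum>q\<in>UNIV. \<Sum>j\<in>UNIV. \<Sum>l\<in>UNIV. A$l$q * B$q$j * C$l$j)"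
    by (rule sum3_swap)
  also have "\<dots> = (\<Sum>q\<in>UNIV. \<Sum>j\<in>UNIV. \<Sum>l\<in>UNIV. B$q$j * (A$l$q * C$l$j))"
    by (intro sum.cong refl) (simp add: mult_ac)
  also have "\<dots> = B \<bullet> (transpose A ** C)"
    by (simp add: inner_mat matrix_matrix_mult_def transpose_def sum_distrib_left)
  finally show ?thesis .
qed

lemma inner_mmul_right:
  fixes A :: "real^'p^'q" and B :: "real^'q^'m" and C :: "real^'p^'m"
  shows "(B ** A) \<bullet> C = B \<bullet> (C ** transpose A)"
proof -
  have "(B ** A) \<bullet> C = (\<Sum>l\<in>UNIV. \<Sum>j\<in>UNIV. \<Sum>q\<in>UNIV. B$l$q * A$q$j * C$l$j)"
    by (simp add: inner_mat matrix_matrix_mult_def sum_distrib_right)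
  also have "\<dots> = (\<Sum>l\<in>UNIV. \<Sum>q\<in>UNIV. \<Sum>j\<in>UNIV. B$l$q * A$q$j * C$l$j)"
    by (rule sum.cong[OF refl], rule sum.swap)
  also have "\<dots> = (\<Sum>l\<in>UNIV. \<Sum>q\<in>UNIV. \<Sum>j\<in>UNIV. B$l$q * (C$l$j * A$q$j))"
    by (intro sum.cong refl) (simp add: mult_ac)
  also have "\<dots> = B \<bullet> (C ** transpose A)"
    by (simp add: inner_mat matrix_matrix_mult_def transpose_def sum_distrib_left)
  finally show ?thesis .
qed

lemma inner_sandwich:
  fixes A :: "real^'m^'m" and Y X :: "real^'p^'m" and B :: "real^'p^'p"
  shows "X \<bullet> (A ** Y ** B) = (transpose A ** X ** transpose B) \<bullet> Y"
proof -
  have "X \<bullet> (A ** Y ** B) = (A ** (Y ** B)) \<bullet> X" by (simp add: inner_commute matrix_mul_assoc)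
  also have "\<dots> = (Y ** B) \<bullet> (transpose A ** X)" by (rule inner_mmul_left)
  also have "\<dots> = Y \<bullet> (transpose A ** X ** transpose B)" by (rule inner_mmul_right)
  finally show ?thesis by (simp add: inner_commute)
qed

lemma inv_sym:
  fixes S :: "real^'n^'n"
  assumes "transpose S = S" "S ** Sinv = mat 1" "Sinv ** S = mat 1"
  shows "transpose Sinv = Sinv"
proof -
  have "transpose Sinv ** S = mat 1"
    using assms by (metis matrix_transpose_mul transpose_mat)
  then have "transpose Sinv = transpose Sinv ** (S ** Sinv)" using assms by simp
  also have "\<dots> = Sinv" using \<open>transpose Sinv ** S = mat 1\<close> by (simp add: matrix_mul_assoc)
  finally show ?thesis .
qed

lemma matrix_inv_props:
  fixes S :: "real^'n^'n"
  assumes "\<forall>v. S *v v = 0 \<longrightarrow> v = 0"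
  shows "S ** matrix_inv S = mat 1" "matrix_inv S ** S = mat 1"
proof -
  have "invertible S" using assms matrix_left_invertible_ker invertible_left_inverse by blast
  then have "\<exists>A'. S ** A' = mat 1 \<and> A' ** S = mat 1" unfolding invertible_def .
  then have "S ** matrix_inv S = mat 1 \<and> matrix_inv S ** S = mat 1"
    unfolding matrix_inv_def by (rule someI_ex)
  then show "S ** matrix_inv S = mat 1" "matrix_inv S ** S = mat 1" by auto
qed




lemma w_sum1:
  assumes "finite A"
  shows "(\<Sum>S\<in>Pow A. fact (card S) * fact (card A - card S) / fact (card A + 1) :: real) = 1"
proof -
  let ?w = "\<lambda>S. fact (card S) * fact (card A - card S) / fact (card A + 1) :: real"
  have "(\<Sum>S\<in>Pow A. ?w S) = (\<Sum>s\<in>{0..card A}. \<Sum>S\<in>{S\<in>Pow A. card S = s}. ?w S)"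
    by (rule sum.group[symmetric]) (auto simp: assms card_mono)
  also have "\<dots> = (\<Sum>s\<in>{0..card A}. 1 / real (card A + 1))"
  proof (rule sum.cong)
    fix s assume s: "s \<in> {0..card A}"
    have "(\<Sum>S\<in>{S\<in>Pow A. card S = s}. ?w S) = (\<Sum>S\<in>{S\<in>Pow A. card S = s}. fact s * fact (card A - s) / fact (card A + 1) :: real)"
      by (rule sum.cong) auto
    also have "\<dots> = real (card A choose s) * (fact s * fact (card A - s) / fact (card A + 1))"
      using n_subsets[OF assms, of s] by (simp add: Pow_def)
    also have "\<dots> = 1 / real (card A + 1)"
    proof -
      have "fact (card A) + fact (card A) * real (card A) > (0::real)" by (simp add: add_pos_nonneg)
      then show ?thesis using s by (simp add: binomial_fact field_simps)
    qed
    finally show "(\<Sum>S\<in>{S\<in>Pow A. card S = s}. ?w S) = 1 / real (card A + 1)" .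
  qed simp
  also have "\<dots> = 1" by simp
  finally show ?thesis .
qed

lemma w_sum_half:
  assumes "finite A" "j \<in> A"
  shows "(\<Sum>S\<in>{S\<in>Pow A. j \<in> S}. fact (card S) * fact (card A - card S) / fact (card A + 1) :: real) = 1/2"
proof -
  let ?w = "\<lambda>S. fact (card S) * fact (card A - card S) / fact (card A + 1) :: real"
  have "(\<Sum>S\<in>{S\<in>Pow A. j \<in> S}. ?w S) = (\<Sum>S\<in>{S\<in>Pow A. j \<notin> S}. ?w S)"
  proof -
    have key: "?w (A - S) = ?w S" if "S \<subseteq> A" for S
    proof -
      have c: "card (A - S) = card A - card S" using assms(1) that by (simp add: card_Diff_subset finite_subset)
      have "card S \<le> card A" using that assms(1) card_mono by blast
      then show ?thesis using c by (simp add: mult.commute)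
    qed
    show ?thesis
      by (rule sum.reindex_bij_witness[where i="\<lambda>S. A - S" and j="\<lambda>S. A - S"]) (use assms key in auto)
  qed
  moreover have "(\<Sum>S\<in>{S\<in>Pow A. j \<in> S}. ?w S) + (\<Sum>S\<in>{S\<in>Pow A. j \<notin> S}. ?w S) = 1"
  proof -
    have "Pow A = {S\<in>Pow A. j \<in> S} \<union> {S\<in>Pow A. j \<notin> S}" by auto
    then have "(\<Sum>S\<in>Pow A. ?w S) = (\<Sum>S\<in>{S\<in>Pow A. j \<in> S}. ?w S) + (\<Sum>S\<in>{S\<in>Pow A. j \<notin> S}. ?w S)"
      by (metis (no_types, lifting) sum.union_disjoint assms(1) finite_Pow_iff finite_Un disjoint_iff mem_Collect_eq)
    then show ?thesis using w_sum1[OF assms(1)] by simp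
  qed
  ultimately show ?thesis by linarith
qed

lemma shapley_quad:
  fixes c :: "'p::finite \<Rightarrow> 'p \<Rightarrow> real" and F :: "'p set \<Rightarrow> real" and k :: 'p
  assumes sym: "\<And>i j. c i j = c j i"
    and F: "\<And>S. F S = (\<Sum>j\<in>S. \<Sum>j'\<in>S. c j j')"
  shows "(\<Sum>S\<in>Pow (UNIV - {k}). (fact (card S) * fact (CARD('p) - card S - 1) / fact CARD('p)) *
            (F (insert k S) - F S)) = (\<Sum>j\<in>UNIV. c k j)"
proof -
  define A where "A = (UNIV::'p set) - {k}"
  have fA: "finite A" by simp
  have cardA: "CARD('p) = card A + 1" unfolding A_def
    by (simp add: card_Diff_subset)
  define w where "w S = (fact (card S) * fact (card A - card S) / fact (card A + 1) :: real)" for S :: "'p set"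
  have wS: "fact (card S) * fact (CARD('p) - card S - 1) / fact CARD('p) = w S" for S :: "'p set"
    unfolding w_def cardA by simp
  have inc: "F (insert k S) - F S = c k k + 2 * (\<Sum>j\<in>S. c k j)" if "S \<in> Pow A" for S
  proof -
    have kS: "k \<notin> S" "finite S" using that unfolding A_def by auto
    have "F (insert k S) = c k k + (\<Sum>j'\<in>S. c k j') + (\<Sum>j\<in>S. c j k) + F S"
      unfolding F using kS by (simp add: sum.insert sum.distrib)
    moreover have "(\<Sum>j\<in>S. c j k) = (\<Sum>j\<in>S. c k j)" using sym by simp
    ultimately show ?thesis by simp
  qed
  have swap: "(\<Sum>S\<in>Pow A. w S * (\<Sum>j\<in>S. c k j)) = (\<Sum>j\<in>A. c k j * (\<Sum>S\<in>{S\<in>Pow A. j \<in> S}. w S))"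
  proof -
    have "(\<Sum>S\<in>Pow A. w S * (\<Sum>j\<in>S. c k j)) = (\<Sum>S\<in>Pow A. \<Sum>j\<in>A. if j \<in> S then w S * c k j else 0)"
    proof (rule sum.cong[OF refl])
      fix S assume "S \<in> Pow A"
      then have "S \<subseteq> A" by auto
      then have "(\<Sum>j\<in>S. c k j) = (\<Sum>j\<in>A. if j \<in> S then c k j else 0)"
        using fA by (simp add: sum.inter_restrict[symmetric] Int_absorb1)
      then show "w S * (\<Sum>j\<in>S. c k j) = (\<Sum>j\<in>A. if j \<in> S then w S * c k j else 0)"
        by (simp add: sum_distrib_left if_distrib cong: if_cong)
    qed
    also have "\<dots> = (\<Sum>j\<in>A. \<Sum>S\<in>Pow A. if j \<in> S then w S * c k j else 0)"
      by (rule sum.swap)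
    also have "\<dots> = (\<Sum>j\<in>A. c k j * (\<Sum>S\<in>{S\<in>Pow A. j \<in> S}. w S))"
      by (simp add: sum.inter_filter[symmetric] sum_distrib_left mult.commute)
    finally show ?thesis .
  qed
  have "(\<Sum>S\<in>Pow (UNIV - {k}). (fact (card S) * fact (CARD('p) - card S - 1) / fact CARD('p)) *
            (F (insert k S) - F S)) = (\<Sum>S\<in>Pow A. w S * (c k k + 2 * (\<Sum>j\<in>S. c k j)))"
    unfolding A_def[symmetric] wS by (rule sum.cong[OF refl]) (simp add: inc)
  also have "\<dots> = c k k * (\<Sum>S\<in>Pow A. w S) + 2 * (\<Sum>S\<in>Pow A. w S * (\<Sum>j\<in>S. c k j))"
    by (simp add: algebra_simps sum.distrib sum_distrib_left sum_distrib_right)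
  also have "\<dots> = c k k + (\<Sum>j\<in>A. c k j)"
  proof -
    have h1: "(\<Sum>S\<in>Pow A. w S) = 1" using w_sum1[OF fA] unfolding w_def .
    have h2: "(\<Sum>S\<in>{S\<in>Pow A. j \<in> S}. w S) = 1/2" if "j \<in> A" for j
      using w_sum_half[OF fA that] unfolding w_def .
    have "(\<Sum>j\<in>A. c k j * (\<Sum>S\<in>{S\<in>Pow A. j \<in> S}. w S)) = (\<Sum>j\<in>A. c k j / 2)"
      by (rule sum.cong[OF refl], subst h2, assumption, simp)
    then show ?thesis unfolding swap h1 by (simp add: sum_divide_distrib[symmetric])
  qed
  also have "\<dots> = (\<Sum>j\<in>UNIV. c k j)"
    unfolding A_def by (simp add: sum.remove[of UNIV k])
  finally show ?thesis .
qed




locale fsetup =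
  fixes a b :: real and \<phi> :: "'m::finite \<Rightarrow> real \<Rightarrow> real"
    and Scol :: "real^'m^'m" and Srow :: "real^'p::finite^'p"
  assumes phi_L2: "\<forall>l. L2fun a b (\<phi> l)"
    and Srow_sym: "transpose Srow = Srow"
    and Scol_sym: "transpose Scol = Scol"
begin

definition G :: "real^'m^'m" where
  "G = (\<chi> l l'. integral\<^sup>L (lebesgue_on {a..b}) (\<lambda>t. \<phi> l t * \<phi> l' t))"
definition coef :: "('p \<Rightarrow> real \<Rightarrow> real) \<Rightarrow> real^'p^'m" where
  "coef f = (\<chi> l j. integral\<^sup>L (lebesgue_on {a..b}) (\<lambda>t. \<phi> l t * f j t))"
definition fn :: "real^'p^'m \<Rightarrow> 'p \<Rightarrow> real \<Rightarrow> real" where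
  "fn E = (\<lambda>j t. \<Sum>l\<in>UNIV. E$l$j * \<phi> l t)"
definition Kc :: "real \<Rightarrow> real \<Rightarrow> real^'p^'p" where
  "Kc = (\<lambda>s t. ((\<chi> l. \<phi> l s) \<bullet> (Scol *v (\<chi> l. \<phi> l t))) *\<^sub>R Srow)"

lemma L2vec_fn: "L2vec a b (fn E)"
  unfolding L2vec_def fn_def using phi_L2 by (auto intro!: L2fun_sum L2fun_cmult)

lemma ip_fn:
  assumes x: "L2vec a b x"
  shows "ip a b (fn E) x = E \<bullet> coef x"
proof -
  have int: "integrable (lebesgue_on {a..b}) (\<lambda>t. \<phi> l t * x j t)" for l j
    using phi_L2 x unfolding L2vec_def by (simp add: L2_mult_integrable)
  have "ip a b (fn E) x = (\<Sum>j\<in>UNIV. integral\<^sup>L (lebesgue_on {a..b}) (\<lambda>t. \<Sum>l\<in>UNIV. E$l$j * (\<phi> l t * x j t)))"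
    unfolding ip_def fn_def by (simp add: sum_distrib_right mult.assoc)
  also have "\<dots> = (\<Sum>j\<in>UNIV. \<Sum>l\<in>UNIV. E$l$j * integral\<^sup>L (lebesgue_on {a..b}) (\<lambda>t. \<phi> l t * x j t))"
    using int by (simp add: integral_sum)
  also have "\<dots> = (\<Sum>j\<in>UNIV. \<Sum>l\<in>UNIV. E$l$j * coef x $ l $ j)"
    unfolding coef_def by simp
  also have "\<dots> = (\<Sum>l\<in>UNIV. \<Sum>j\<in>UNIV. E$l$j * coef x $ l $ j)"
    by (rule sum.swap)
  also have "\<dots> = E \<bullet> coef x"
    unfolding inner_mat ..
  finally show ?thesis .
qed

lemma coef_fn: "coef (fn E) = G ** E"
proof -
  have int: "integrable (lebesgue_on {a..b}) (\<lambda>t. \<phi> l t * \<phi> l' t)" for l l'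
    using phi_L2 by (simp add: L2_mult_integrable)
  have "coef (fn E) $ l $ j = (G ** E) $ l $ j" for l j
  proof -
    have "coef (fn E) $ l $ j = integral\<^sup>L (lebesgue_on {a..b}) (\<lambda>t. \<Sum>n\<in>UNIV. E$n$j * (\<phi> l t * \<phi> n t))"
      unfolding coef_def fn_def by (simp add: sum_distrib_left mult_ac)
    also have "\<dots> = (\<Sum>n\<in>UNIV. E$n$j * integral\<^sup>L (lebesgue_on {a..b}) (\<lambda>t. \<phi> l t * \<phi> n t))"
      using int by (simp add: integral_sum)
    also have "\<dots> = (G ** E) $ l $ j"
      unfolding G_def matrix_matrix_mult_def by (simp add: mult.commute)
    finally show ?thesis .
  qed
  then show ?thesis by (simp add: vec_eq_iff)
qed

lemma covop_eq:
  assumes x: "L2vec a b x"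
  shows "covop a b Kc x j s = fn (Scol ** coef x ** Srow) j s"
proof -
  have int: "integrable (lebesgue_on {a..b}) (\<lambda>t. \<phi> l t * x j t)" for l j
    using phi_L2 x unfolding L2vec_def by (simp add: L2_mult_integrable)
  have srow: "Srow$j$l' = Srow$l'$j" for l'
  proof -
    have "(transpose Srow)$l'$j = Srow$j$l'" by (simp add: transpose_def)
    then show ?thesis using Srow_sym by simp
  qed
  have k1: "Kc s t $ j $ l' = (\<Sum>q\<in>UNIV. \<Sum>r\<in>UNIV. \<phi> q s * (Scol$q$r * \<phi> r t)) * Srow$j$l'" for t l'
    by (simp add: Kc_def inner_vec_def matrix_vector_mult_def sum_distrib_left)
  have pw: "Kc s t $ j $ l' * x l' t = (\<Sum>q\<in>UNIV. \<Sum>r\<in>UNIV. (\<phi> q s * Scol$q$r * Srow$j$l') * (\<phi> r t * x l' t))" for t l'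
  proof -
    have "Kc s t $ j $ l' * x l' t = (\<Sum>q\<in>UNIV. \<Sum>r\<in>UNIV. \<phi> q s * (Scol$q$r * \<phi> r t) * Srow$j$l' * x l' t)"
      unfolding k1 by (simp add: sum_distrib_right)
    also have "\<dots> = (\<Sum>q\<in>UNIV. \<Sum>r\<in>UNIV. (\<phi> q s * Scol$q$r * Srow$j$l') * (\<phi> r t * x l' t))"
      by (intro sum.cong refl) (simp add: mult_ac)
    finally show ?thesis .
  qed
  have "covop a b Kc x j s = (\<Sum>l'\<in>UNIV. integral\<^sup>L (lebesgue_on {a..b}) (\<lambda>t. \<Sum>q\<in>UNIV. \<Sum>r\<in>UNIV. (\<phi> q s * Scol$q$r * Srow$j$l') * (\<phi> r t * x l' t)))"
    unfolding covop_def pw ..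
  also have "\<dots> = (\<Sum>l'\<in>UNIV. \<Sum>q\<in>UNIV. \<Sum>r\<in>UNIV. (\<phi> q s * Scol$q$r * Srow$j$l') * coef x $ r $ l')"
    unfolding coef_def using int by (simp add: integral_sum)
  also have "\<dots> = (\<Sum>q\<in>UNIV. \<Sum>l'\<in>UNIV. \<Sum>r\<in>UNIV. (\<phi> q s * Scol$q$r * Srow$j$l') * coef x $ r $ l')"
    by (rule sum.swap)
  also have "\<dots> = (\<Sum>q\<in>UNIV. \<Sum>l'\<in>UNIV. \<Sum>r\<in>UNIV. Scol$q$r * coef x $ r $ l' * Srow$l'$j * \<phi> q s)"
    by (intro sum.cong refl) (simp add: srow mult_ac)
  also have "\<dots> = fn (Scol ** coef x ** Srow) j s"
    unfolding fn_def matrix_matrix_mult_def by (simp add: sum_distrib_right)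
  finally show ?thesis .
qed

lemma ip_cong:
  assumes "\<And>j t. t \<in> {a..b} \<Longrightarrow> x j t = x' j t"
  shows "ip a b x y = ip a b x' y"
  unfolding ip_def
  by (rule sum.cong[OF refl], rule Bochner_Integration.integral_cong) (auto simp: assms)

lemma coef_cong:
  assumes "\<And>j t. t \<in> {a..b} \<Longrightarrow> x j t = x' j t"
  shows "coef x = coef x'"
  unfolding coef_def using assms
  by (simp add: vec_eq_iff, intro allI Bochner_Integration.integral_cong) auto

lemma ip_comm: "ip a b x y = ip a b y x"
  unfolding ip_def by (simp add: mult.commute)

end



locale fsetup2 = fsetup a b \<phi> Scol Srow
  for a b :: real and \<phi> :: "'m::finite \<Rightarrow> real \<Rightarrow> real"
    and Scol :: "real^'m^'m" and Srow :: "real^'p::finite^'p" +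
  fixes \<psi> :: "nat \<Rightarrow> 'p \<Rightarrow> real \<Rightarrow> real" and \<pi> :: "nat \<Rightarrow> real"
  assumes eigsys0: "is_eigensystem a b (\<lambda>s t. ((\<chi> l. \<phi> l s) \<bullet> (Scol *v (\<chi> l. \<phi> l t))) *\<^sub>R Srow) \<psi> \<pi>"
begin

lemma eigsys: "is_eigensystem a b Kc \<psi> \<pi>"
  using eigsys0 unfolding Kc_def .

lemma psiL2: "i \<ge> 1 \<Longrightarrow> L2vec a b (\<psi> i)"
  using eigsys unfolding is_eigensystem_def by blast
lemma orth: "i \<ge> 1 \<Longrightarrow> i' \<ge> 1 \<Longrightarrow> ip a b (\<psi> i) (\<psi> i') = (if i = i' then 1 else 0)"
  using eigsys unfolding is_eigensystem_def by blast
lemma eig: "i \<ge> 1 \<Longrightarrow> s \<in> {a..b} \<Longrightarrow> covop a b Kc (\<psi> i) j s = \<pi> i * \<psi> i j s"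
  using eigsys unfolding is_eigensystem_def by blast
lemma pimono: "i \<ge> 1 \<Longrightarrow> i' \<ge> i \<Longrightarrow> \<pi> i' \<le> \<pi> i"
  using eigsys unfolding is_eigensystem_def by blast
lemma compl: "L2vec a b x \<Longrightarrow> (\<forall>i\<ge>1. ip a b x (\<psi> i) = 0) \<Longrightarrow> ip a b x x = 0"
  using eigsys unfolding is_eigensystem_def by blast

definition c :: "nat \<Rightarrow> real^'p^'m" where "c i = coef (\<psi> i)"

lemma fn_scale: "fn (r *\<^sub>R E) j t = r * fn E j t"
  unfolding fn_def by (simp add: sum_distrib_left mult.assoc)

lemma eig_coef:
  assumes i: "i \<ge> 1"
  shows "\<pi> i *\<^sub>R c i = G ** (Scol ** c i ** Srow)"
proof -
  have "\<pi> i *\<^sub>R c i = coef (\<lambda>j t. \<pi> i * \<psi> i j t)"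
    unfolding c_def coef_def by (simp add: vec_eq_iff mult.left_commute)
  also have "\<dots> = coef (fn (Scol ** c i ** Srow))"
  proof (rule coef_cong)
    fix j t assume t: "t \<in> {a..b}"
    show "\<pi> i * \<psi> i j t = fn (Scol ** c i ** Srow) j t"
      using eig[OF i t, of j] covop_eq[OF psiL2[OF i], folded c_def, of j t] by simp
  qed
  also have "\<dots> = G ** (Scol ** c i ** Srow)" by (rule coef_fn)
  finally show ?thesis .
qed

lemma ip_fn_psi: "i \<ge> 1 \<Longrightarrow> ip a b (fn D) (\<psi> i) = D \<bullet> c i"
  unfolding c_def by (rule ip_fn[OF psiL2])

definition Ev :: "nat \<Rightarrow> real^'p^'m" where
  "Ev i = inverse (\<pi> i) *\<^sub>R (Scol ** c i ** Srow)"

lemma psi_expand: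
  assumes i: "i \<ge> 1" and p: "\<pi> i \<noteq> 0" and t: "t \<in> {a..b}"
  shows "\<psi> i j t = fn (Ev i) j t"
proof -
  have "fn (Scol ** c i ** Srow) j t = \<pi> i * \<psi> i j t"
    using covop_eq[OF psiL2[OF i], folded c_def] eig[OF i t] by simp
  then show ?thesis unfolding Ev_def fn_scale using p by simp
qed

lemma Ev_orth:
  assumes i: "i \<ge> 1" and i': "i' \<ge> 1" and p: "\<pi> i \<noteq> 0"
  shows "Ev i \<bullet> c i' = (if i = i' then 1 else 0)"
proof -
  have "ip a b (\<psi> i) (\<psi> i') = ip a b (fn (Ev i)) (\<psi> i')"
    by (rule ip_cong) (simp add: psi_expand[OF i p])
  then show ?thesis using orth[OF i i'] ip_fn_psi[OF i'] by simp
qed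

lemma count:
  assumes fI: "finite I" and I: "\<And>i. i \<in> I \<Longrightarrow> i \<ge> 1 \<and> \<pi> i \<noteq> 0"
  shows "card I \<le> CARD('m) * CARD('p)"
proof -
  have inj: "inj_on Ev I"
  proof (rule inj_onI)
    fix i i' assume ii: "i \<in> I" "i' \<in> I" "Ev i = Ev i'"
    have "Ev i \<bullet> c i' = 1" using ii Ev_orth[of i' i'] I by simp
    then show "i = i'" using Ev_orth[of i i'] I ii by (auto split: if_splits)
  qed
  have ind: "independent (Ev ` I)"
  proof (rule real_vector.independent_if_scalars_zero)
    show "finite (Ev ` I)" using fI by simp
    fix f x assume s: "(\<Sum>y\<in>Ev ` I. f y *\<^sub>R y) = 0" and x: "x \<in> Ev ` I"
    then obtain i0 where i0: "i0 \<in> I" "x = Ev i0" by auto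
    have "0 = (\<Sum>y\<in>Ev ` I. f y *\<^sub>R y) \<bullet> c i0" using s by simp
    also have "\<dots> = (\<Sum>i\<in>I. f (Ev i) * (Ev i \<bullet> c i0))"
      by (simp add: sum.reindex[OF inj] inner_sum_left)
    also have "\<dots> = (\<Sum>i\<in>I. if i = i0 then f (Ev i) else 0)"
      by (rule sum.cong[OF refl]) (use I i0 Ev_orth in auto)
    also have "\<dots> = f x" using i0 fI by simp
    finally show "f x = 0" by simp
  qed
  have "card (Ev ` I) \<le> DIM(real^'p^'m)" using independent_bound[OF ind] by simp
  then show ?thesis using card_image[OF inj] by simp
qed

lemma pi_zero:
  assumes i: "i > CARD('m) * CARD('p)"
  shows "\<pi> i = 0"
proof (rule ccontr)
  let ?N = "CARD('m) * CARD('p)"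
  assume p: "\<pi> i \<noteq> 0"
  have i1: "i \<ge> 1" using i by simp
  show False
  proof (cases "\<pi> i > 0")
    case True
    have "card {1..?N+1} \<le> ?N"
    proof (rule count)
      fix i' assume "i' \<in> {1..?N+1}"
      then have "i' \<ge> 1" "i \<ge> i'" using i by auto
      then show "i' \<ge> 1 \<and> \<pi> i' \<noteq> 0" using pimono[of i' i] True by auto
    qed simp
    then show False by simp
  next
    case False
    then have neg: "\<pi> i < 0" using p by simp
    have "card {i..i+?N} \<le> ?N"
    proof (rule count)
      fix i' assume "i' \<in> {i..i+?N}"
      then have "i' \<ge> 1" "i' \<ge> i" using i1 by auto
      then show "i' \<ge> 1 \<and> \<pi> i' \<noteq> 0" using pimono[OF i1, of i'] neg by auto
    qed simp
    then show False by simp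
  qed
qed

end



lemma ip_lin:
  assumes x: "L2vec a b x" and y: "L2vec a b y" and fI: "finite I" and f: "\<And>i. i \<in> I \<Longrightarrow> L2vec a b (f i)"
  shows "ip a b (\<lambda>j t. x j t - (\<Sum>i\<in>I. \<alpha> i * f i j t)) y = ip a b x y - (\<Sum>i\<in>I. \<alpha> i * ip a b (f i) y)"
proof -
  have intxy: "integrable (lebesgue_on {a..b}) (\<lambda>t. x j t * y j t)" for j
    using x y unfolding L2vec_def by (simp add: L2_mult_integrable)
  have intf: "integrable (lebesgue_on {a..b}) (\<lambda>t. f i j t * y j t)" if "i \<in> I" for i j
    using f[OF that] y unfolding L2vec_def by (simp add: L2_mult_integrable)
  have "integral\<^sup>L (lebesgue_on {a..b}) (\<lambda>t. (x j t - (\<Sum>i\<in>I. \<alpha> i * f i j t)) * y j t)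
      = integral\<^sup>L (lebesgue_on {a..b}) (\<lambda>t. x j t * y j t) - (\<Sum>i\<in>I. \<alpha> i * integral\<^sup>L (lebesgue_on {a..b}) (\<lambda>t. f i j t * y j t))" for j
  proof -
    have "integral\<^sup>L (lebesgue_on {a..b}) (\<lambda>t. (x j t - (\<Sum>i\<in>I. \<alpha> i * f i j t)) * y j t)
        = integral\<^sup>L (lebesgue_on {a..b}) (\<lambda>t. x j t * y j t - (\<Sum>i\<in>I. \<alpha> i * (f i j t * y j t)))"
      by (simp add: left_diff_distrib sum_distrib_right mult.assoc)
    also have "\<dots> = integral\<^sup>L (lebesgue_on {a..b}) (\<lambda>t. x j t * y j t) - integral\<^sup>L (lebesgue_on {a..b}) (\<lambda>t. \<Sum>i\<in>I. \<alpha> i * (f i j t * y j t))"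
      by (rule Bochner_Integration.integral_diff) (use intxy intf in auto)
    also have "\<dots> = integral\<^sup>L (lebesgue_on {a..b}) (\<lambda>t. x j t * y j t) - (\<Sum>i\<in>I. \<alpha> i * integral\<^sup>L (lebesgue_on {a..b}) (\<lambda>t. f i j t * y j t))"
      using intf by (simp add: integral_sum)
    finally show ?thesis .
  qed
  then have "ip a b (\<lambda>j t. x j t - (\<Sum>i\<in>I. \<alpha> i * f i j t)) y
     = (\<Sum>j\<in>UNIV. integral\<^sup>L (lebesgue_on {a..b}) (\<lambda>t. x j t * y j t)) - (\<Sum>j\<in>UNIV. \<Sum>i\<in>I. \<alpha> i * integral\<^sup>L (lebesgue_on {a..b}) (\<lambda>t. f i j t * y j t))"
    unfolding ip_def by (simp add: sum_subtractf)
  also have "(\<Sum>j\<in>UNIV. \<Sum>i\<in>I. \<alpha> i * integral\<^sup>L (lebesgue_on {a..b}) (\<lambda>t. f i j t * y j t))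
      = (\<Sum>i\<in>I. \<Sum>j\<in>UNIV. \<alpha> i * integral\<^sup>L (lebesgue_on {a..b}) (\<lambda>t. f i j t * y j t))"
    by (rule sum.swap)
  finally show ?thesis unfolding ip_def by (simp add: sum_distrib_left)
qed

lemma ip_zero:
  assumes r: "L2vec a b r" and g: "L2vec a b g" and rr: "ip a b r r = 0"
  shows "ip a b r g = 0"
proof -
  have nn: "0 \<le> integral\<^sup>L (lebesgue_on {a..b}) (\<lambda>t. r j t * r j t)" for j
    by (simp add: integral_nonneg_AE)
  have "\<forall>j\<in>UNIV. integral\<^sup>L (lebesgue_on {a..b}) (\<lambda>t. r j t * r j t) = 0"
    using rr nn unfolding ip_def by (subst sum_nonneg_eq_0_iff[symmetric]) auto
  then have z: "integral\<^sup>L (lebesgue_on {a..b}) (\<lambda>t. r j t * r j t) = 0" for j by simp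
  have "integral\<^sup>L (lebesgue_on {a..b}) (\<lambda>t. r j t * g j t) = 0" for j
  proof -
    have int: "integrable (lebesgue_on {a..b}) (\<lambda>t. r j t * r j t)"
      using r unfolding L2vec_def by (simp add: L2_mult_integrable)
    have "AE t in lebesgue_on {a..b}. r j t * r j t = 0"
      using integral_nonneg_eq_0_iff_AE[OF int] z by simp
    then have "AE t in lebesgue_on {a..b}. r j t * g j t = 0"
      by (rule AE_mp) simp
    then show ?thesis by (rule integral_eq_zero_AE)
  qed
  then show ?thesis unfolding ip_def by simp
qed

context fsetup2
begin

lemma G_sym: "transpose G = G"
  unfolding G_def transpose_def by (simp add: vec_eq_iff mult.commute)

lemma quad:
  fixes Gi Sc :: "real^'m^'m" and R :: "real^'p^'p" and D :: "real^'p^'m"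
  assumes Ginv: "G ** Gi = mat 1" and Scinv: "Scol ** Sc = mat 1" and Rinv: "R ** Srow = mat 1"
  shows "(\<Sum>i=1..CARD('m) * CARD('p). inverse (\<pi> i) * (D \<bullet> c i)\<^sup>2) = D \<bullet> (Sc ** D ** R)"
proof -
  let ?N = "CARD('m) * CARD('p)"
  define E where "E = Gi ** Sc ** D ** R"
  have Ginv': "G ** (Gi ** X) = X" for X :: "real^'p^'m"
    by (metis Ginv matrix_mul_assoc matrix_mul_lid)
  have Scinv': "Scol ** (Sc ** X) = X" for X :: "real^'p^'m"
    by (metis Scinv matrix_mul_assoc matrix_mul_lid)
  have bk: "Scol ** G ** E ** Srow = D"
  proof -
    have "Scol ** G ** E ** Srow = Scol ** (G ** (Gi ** (Sc ** (D ** (R ** Srow)))))"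
      unfolding E_def by (simp only: matrix_mul_assoc)
    also have "\<dots> = D" by (simp add: Rinv Ginv' Scinv')
    finally show ?thesis .
  qed
  have key1: "D \<bullet> c i = \<pi> i * (E \<bullet> c i)" if i: "i \<ge> 1" for i
  proof -
    have "\<pi> i * (E \<bullet> c i) = E \<bullet> (\<pi> i *\<^sub>R c i)" by simp
    also have "\<dots> = E \<bullet> ((G ** Scol) ** c i ** Srow)"
      by (simp add: eig_coef[OF i] matrix_mul_assoc)
    also have "\<dots> = (transpose (G ** Scol) ** E ** transpose Srow) \<bullet> c i"
      by (rule inner_sandwich)
    also have "\<dots> = (Scol ** G ** E ** Srow) \<bullet> c i"
      by (simp add: matrix_transpose_mul G_sym Scol_sym Srow_sym)
    also have "\<dots> = D \<bullet> c i" using bk by simp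
    finally show ?thesis by simp
  qed
  have trm: "inverse (\<pi> i) * (D \<bullet> c i)\<^sup>2 = (D \<bullet> c i) * (E \<bullet> c i)" if i: "i \<ge> 1" for i
  proof (cases "\<pi> i = 0")
    case True then show ?thesis using key1[OF i] by simp
  next
    case False then show ?thesis using key1[OF i] by (simp add: power2_eq_square field_simps)
  qed
  define x where "x = fn D"
  define g where "g = fn E"
  define r where "r = (\<lambda>j t. x j t - (\<Sum>i\<in>{1..?N}. (D \<bullet> c i) * \<psi> i j t))"
  have xL: "L2vec a b x" and gL: "L2vec a b g" unfolding x_def g_def by (rule L2vec_fn)+
  have rL: "L2vec a b r"
    using xL psiL2 unfolding r_def L2vec_def
    by (auto intro!: L2fun_diff L2fun_sum L2fun_cmult)
  have rlin: "ip a b r y = ip a b x y - (\<Sum>i\<in>{1..?N}. (D \<bullet> c i) * ip a b (\<psi> i) y)" if "L2vec a b y" for y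
    unfolding r_def by (rule ip_lin[OF xL that]) (auto intro: psiL2)
  have rorth: "ip a b r (\<psi> i') = 0" if i': "i' \<ge> 1" for i'
  proof -
    have "ip a b r (\<psi> i') = D \<bullet> c i' - (\<Sum>i\<in>{1..?N}. if i = i' then D \<bullet> c i else 0)"
      unfolding rlin[OF psiL2[OF i']] x_def ip_fn_psi[OF i']
      by (intro arg_cong2[where f="(-)"] refl sum.cong) (use i' orth in auto)
    also have "\<dots> = 0"
    proof (cases "i' \<le> ?N")
      case True then show ?thesis using i' by simp
    next
      case False
      then have "\<pi> i' = 0" by (intro pi_zero) simp
      then show ?thesis using key1[OF i'] False by simp
    qed
    finally show ?thesis .
  qed
  have "ip a b r r = 0" using compl[OF rL] rorth by blast
  then have "ip a b r g = 0" using ip_zero[OF rL gL] by simp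
  then have "ip a b x g = (\<Sum>i\<in>{1..?N}. (D \<bullet> c i) * ip a b (\<psi> i) g)" using rlin[OF gL] by simp
  also have "\<dots> = (\<Sum>i\<in>{1..?N}. (D \<bullet> c i) * (E \<bullet> c i))"
  proof (rule sum.cong[OF refl])
    fix i assume "i \<in> {1..?N}"
    then have i: "i \<ge> 1" by simp
    show "(D \<bullet> c i) * ip a b (\<psi> i) g = (D \<bullet> c i) * (E \<bullet> c i)"
      using ip_comm[of "\<psi> i" g] ip_fn_psi[OF i, of E] by (simp add: g_def)
  qed
  also have "\<dots> = (\<Sum>i=1..?N. inverse (\<pi> i) * (D \<bullet> c i)\<^sup>2)"
    by (rule sum.cong[OF refl]) (simp add: trm)
  finally have A: "(\<Sum>i=1..?N. inverse (\<pi> i) * (D \<bullet> c i)\<^sup>2) = ip a b x g" by simp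
  have "ip a b x g = D \<bullet> (G ** E)" unfolding x_def g_def by (simp add: ip_fn[OF L2vec_fn] coef_fn)
  also have "G ** E = Sc ** D ** R" unfolding E_def by (simp add: matrix_mul_assoc Ginv)
  finally show ?thesis using A by simp
qed

end



lemma sum4_swap:
  fixes f :: "'a::finite \<Rightarrow> 'b::finite \<Rightarrow> 'c::finite \<Rightarrow> 'd::finite \<Rightarrow> real"
  shows "(\<Sum>x\<in>UNIV. \<Sum>y\<in>UNIV. \<Sum>z\<in>UNIV. \<Sum>u\<in>UNIV. f x y z u) = (\<Sum>u\<in>UNIV. \<Sum>y\<in>UNIV. \<Sum>z\<in>UNIV. \<Sum>x\<in>UNIV. f x y z u)"
proof -
  have i1: "(\<Sum>y\<in>UNIV. \<Sum>z\<in>UNIV. \<Sum>u\<in>UNIV. f x y z u) = (\<Sum>u\<in>UNIV. \<Sum>y\<in>UNIV. \<Sum>z\<in>UNIV. f x y z u)" for x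
  proof -
    have "(\<Sum>y\<in>UNIV. \<Sum>z\<in>UNIV. \<Sum>u\<in>UNIV. f x y z u) = (\<Sum>y\<in>UNIV. \<Sum>u\<in>UNIV. \<Sum>z\<in>UNIV. f x y z u)"
      by (rule sum.cong[OF refl], rule sum.swap)
    also have "\<dots> = (\<Sum>u\<in>UNIV. \<Sum>y\<in>UNIV. \<Sum>z\<in>UNIV. f x y z u)" by (rule sum.swap)
    finally show ?thesis .
  qed
  have i2: "(\<Sum>x\<in>UNIV. \<Sum>y\<in>UNIV. \<Sum>z\<in>UNIV. f x y z u) = (\<Sum>y\<in>UNIV. \<Sum>z\<in>UNIV. \<Sum>x\<in>UNIV. f x y z u)" for u
  proof -
    have "(\<Sum>x\<in>UNIV. \<Sum>y\<in>UNIV. \<Sum>z\<in>UNIV. f x y z u) = (\<Sum>y\<in>UNIV. \<Sum>x\<in>UNIV. \<Sum>z\<in>UNIV. f x y z u)" by (rule sum.swap)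
    also have "\<dots> = (\<Sum>y\<in>UNIV. \<Sum>z\<in>UNIV. \<Sum>x\<in>UNIV. f x y z u)"
      by (rule sum.cong[OF refl], rule sum.swap)
    finally show ?thesis .
  qed
  have "(\<Sum>x\<in>UNIV. \<Sum>y\<in>UNIV. \<Sum>z\<in>UNIV. \<Sum>u\<in>UNIV. f x y z u) = (\<Sum>x\<in>UNIV. \<Sum>u\<in>UNIV. \<Sum>y\<in>UNIV. \<Sum>z\<in>UNIV. f x y z u)"
    by (rule sum.cong[OF refl], rule i1)
  also have "\<dots> = (\<Sum>u\<in>UNIV. \<Sum>x\<in>UNIV. \<Sum>y\<in>UNIV. \<Sum>z\<in>UNIV. f x y z u)" by (rule sum.swap)
  also have "\<dots> = (\<Sum>u\<in>UNIV. \<Sum>y\<in>UNIV. \<Sum>z\<in>UNIV. \<Sum>x\<in>UNIV. f x y z u)"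
    by (rule sum.cong[OF refl], rule i2)
  finally show ?thesis .
qed

theorem lemma6:
  fixes a b :: real
    and \<phi> :: "'m::finite \<Rightarrow> real \<Rightarrow> real"
    and P :: "'w measure"
    and A :: "'w \<Rightarrow> real^'p::finite^'m"
    and MA :: "real^'p^'m"
    and Srow :: "real^'p^'p" and Scol :: "real^'m^'m"
    and lamrow :: "'p \<Rightarrow> real" and vrow :: "'p \<Rightarrow> real^'p"
    and \<psi> :: "nat \<Rightarrow> 'p \<Rightarrow> real \<Rightarrow> real" and \<pi> :: "nat \<Rightarrow> real"
    and k :: 'p
  assumes ab: "a < b"
    and phi_L2: "\<forall>l. L2fun a b (\<phi> l)"
    and phi_indep: "\<forall>c :: 'm \<Rightarrow> real.
        (AE t in lebesgue_on {a..b}. (\<Sum>l\<in>UNIV. c l * \<phi> l t) = 0) \<longrightarrow> (\<forall>l. c l = 0)"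
    and Srow_sym: "transpose Srow = Srow"
    and Srow_pd: "\<forall>v. v \<noteq> 0 \<longrightarrow> v \<bullet> (Srow *v v) > 0"
    and Scol_sym: "transpose Scol = Scol"
    and Scol_pd: "\<forall>v. v \<noteq> 0 \<longrightarrow> v \<bullet> (Scol *v v) > 0"
    and eig_row: "\<forall>j. Srow *v vrow j = lamrow j *\<^sub>R vrow j"
    and orth_row: "\<forall>j j'. vrow j \<bullet> vrow j' = (if j = j' then 1 else 0)"
    and P_prob: "prob_space P"
    and A_rv: "\<forall>l j. integrable P (\<lambda>w. (A w $ l $ j)\<^sup>2) \<and> (\<lambda>w. A w $ l $ j) \<in> borel_measurable P"
    and MA_mean: "\<forall>l j. MA $ l $ j = integral\<^sup>L P (\<lambda>w. A w $ l $ j)"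
    and cov: "\<forall>i j. \<forall>s\<in>{a..b}. \<forall>t\<in>{a..b}.
        integral\<^sup>L P (\<lambda>w. ((\<Sum>l\<in>UNIV. A w $ l $ i * \<phi> l s) - (\<Sum>l\<in>UNIV. MA $ l $ i * \<phi> l s))
                          * ((\<Sum>l\<in>UNIV. A w $ l $ j * \<phi> l t) - (\<Sum>l\<in>UNIV. MA $ l $ j * \<phi> l t)))
        = Srow $ i $ j * ((\<chi> l. \<phi> l s) \<bullet> (Scol *v (\<chi> l. \<phi> l t)))"
    and eigsys: "is_eigensystem a b
        (\<lambda>s t. ((\<chi> l. \<phi> l s) \<bullet> (Scol *v (\<chi> l. \<phi> l t))) *\<^sub>R Srow) \<psi> \<pi>"
  shows "\<forall>w\<in>space P.
    shapley a b \<psi> \<pi> (CARD('m) * CARD('p)) k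
      (\<lambda>j t. \<Sum>l\<in>UNIV. A w $ l $ j * \<phi> l t)
      (\<lambda>j t. \<Sum>l\<in>UNIV. MA $ l $ j * \<phi> l t)
    = (\<Sum>j\<in>UNIV. (1 / lamrow j) * (vrow j $ k) *
         ((\<chi> l. A w $ l $ k - MA $ l $ k) \<bullet>
          (matrix_inv Scol *v ((A w - MA) *v vrow j))))"
proof
  fix w assume "w \<in> space P"
  interpret fsetup2 a b \<phi> Scol Srow \<psi> \<pi>
    by unfold_locales (simp_all add: phi_L2 Srow_sym Scol_sym eigsys)
  let ?N = "CARD('m) * CARD('p)"
  have Gker: "\<forall>v. G *v v = 0 \<longrightarrow> v = 0"
  proof (intro allI impI)
    fix v :: "real^'m" assume Gv: "G *v v = 0"
    define h where "h t = (\<Sum>l\<in>UNIV. v$l * \<phi> l t)" for t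
    have intpp: "integrable (lebesgue_on {a..b}) (\<lambda>t. \<phi> l t * \<phi> l' t)" for l l'
      using phi_L2 by (simp add: L2_mult_integrable)
    have hsq: "h t * h t = (\<Sum>l\<in>UNIV. \<Sum>l'\<in>UNIV. (v$l * v$l') * (\<phi> l t * \<phi> l' t))" for t
      unfolding h_def by (simp add: sum_product mult_ac)
    have "integral\<^sup>L (lebesgue_on {a..b}) (\<lambda>t. h t * h t) = (\<Sum>l\<in>UNIV. \<Sum>l'\<in>UNIV. (v$l * v$l') * G$l$l')"
      unfolding hsq G_def using intpp by (simp add: integral_sum)
    also have "\<dots> = v \<bullet> (G *v v)"
      by (simp add: inner_vec_def matrix_vector_mult_def sum_distrib_left mult_ac)
    also have "\<dots> = 0" using Gv by simp
    finally have z: "integral\<^sup>L (lebesgue_on {a..b}) (\<lambda>t. h t * h t) = 0" .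
    have hL: "L2fun a b h" unfolding h_def using phi_L2 by (auto intro!: L2fun_sum L2fun_cmult)
    have int: "integrable (lebesgue_on {a..b}) (\<lambda>t. h t * h t)" using L2_mult_integrable[OF hL hL] .
    have "AE t in lebesgue_on {a..b}. h t * h t = 0"
      using integral_nonneg_eq_0_iff_AE[OF int] z by simp
    then have "AE t in lebesgue_on {a..b}. (\<Sum>l\<in>UNIV. v$l * \<phi> l t) = 0"
      by (rule AE_mp) (simp add: h_def)
    then have "\<forall>l. v$l = 0" using phi_indep by blast
    then show "v = 0" by (simp add: vec_eq_iff)
  qed
  have Scker: "\<forall>v. Scol *v v = 0 \<longrightarrow> v = 0"
    using Scol_pd by (metis inner_zero_right less_irrefl)
  define Gi where "Gi = matrix_inv G"
  define Sc where "Sc = matrix_inv Scol"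
  have Ginv: "G ** Gi = mat 1" unfolding Gi_def using matrix_inv_props[OF Gker] by simp
  have Scinv: "Scol ** Sc = mat 1" "Sc ** Scol = mat 1" unfolding Sc_def using matrix_inv_props[OF Scker] by simp_all
  have Sc_sym: "transpose Sc = Sc" by (rule inv_sym[OF Scol_sym Scinv])
  have Sc_sym': "Sc$x$y = Sc$y$x" for x y
  proof -
    have "(transpose Sc)$y$x = Sc$x$y" by (simp add: transpose_def)
    then show ?thesis using Sc_sym by simp
  qed
  have Srow_sym': "Srow$x$y = Srow$y$x" for x y
  proof -
    have "(transpose Srow)$y$x = Srow$x$y" by (simp add: transpose_def)
    then show ?thesis using Srow_sym by simp
  qed
  have lam: "lamrow q > 0" for q
  proof -
    have "vrow q \<noteq> 0" using orth_row by (metis inner_zero_left zero_neq_one)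
    then have "0 < vrow q \<bullet> (Srow *v vrow q)" using Srow_pd by blast
    also have "\<dots> = lamrow q" using eig_row orth_row by simp
    finally show ?thesis .
  qed
  define V :: "real^'p^'p" where "V = (\<chi> q x. vrow q $ x)"
  have VVt: "V ** transpose V = mat 1"
    unfolding V_def by (simp add: vec_eq_iff matrix_matrix_mult_def transpose_def mat_def orth_row[unfolded inner_vec_def, simplified])
  have VtV: "transpose V ** V = mat 1" using VVt matrix_left_right_inverse by blast
  have vv: "(\<Sum>q\<in>UNIV. vrow q $ x * vrow q $ y) = (if x = y then 1 else 0)" for x y
  proof -
    have "(transpose V ** V) $ x $ y = (\<Sum>q\<in>UNIV. vrow q $ x * vrow q $ y)"
      unfolding V_def by (simp add: matrix_matrix_mult_def transpose_def)
    then show ?thesis using VtV by (simp add: mat_def)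
  qed
  define R :: "real^'p^'p" where "R = (\<chi> x y. \<Sum>q\<in>UNIV. inverse (lamrow q) * vrow q $ x * vrow q $ y)"
  have Rinv: "R ** Srow = mat 1"
  proof -
    have ev: "(\<Sum>z\<in>UNIV. vrow q $ z * Srow $ z $ y) = lamrow q * vrow q $ y" for q y
    proof -
      have "(\<Sum>z\<in>UNIV. vrow q $ z * Srow $ z $ y) = (Srow *v vrow q) $ y"
        by (simp add: matrix_vector_mult_def Srow_sym' mult.commute)
      then show ?thesis using eig_row by simp
    qed
    have "(R ** Srow) $ x $ y = (if x = y then 1 else 0)" for x y
    proof -
      have "(R ** Srow) $ x $ y = (\<Sum>z\<in>UNIV. (\<Sum>q\<in>UNIV. inverse (lamrow q) * vrow q $ x * vrow q $ z) * Srow$z$y)"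
        unfolding R_def matrix_matrix_mult_def by simp
      also have "\<dots> = (\<Sum>z\<in>UNIV. \<Sum>q\<in>UNIV. inverse (lamrow q) * vrow q $ x * (vrow q $ z * Srow $ z $ y))"
        unfolding sum_distrib_right by (intro sum.cong refl) (simp add: mult_ac)
      also have "\<dots> = (\<Sum>q\<in>UNIV. \<Sum>z\<in>UNIV. inverse (lamrow q) * vrow q $ x * (vrow q $ z * Srow $ z $ y))"
        by (rule sum.swap)
      also have "\<dots> = (\<Sum>q\<in>UNIV. inverse (lamrow q) * vrow q $ x * (lamrow q * vrow q $ y))"
        by (simp add: sum_distrib_left[symmetric] ev)
      also have "\<dots> = (\<Sum>q\<in>UNIV. vrow q $ x * vrow q $ y)"
      proof (intro sum.cong refl)
        fix q
        have "lamrow q \<noteq> 0" using lam[of q] by simp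
        then show "inverse (lamrow q) * vrow q $ x * (lamrow q * vrow q $ y) = vrow q $ x * vrow q $ y"
          by (simp add: field_simps)
      qed
      finally show ?thesis using vv by simp
    qed
    then show ?thesis by (simp add: vec_eq_iff mat_def)
  qed
  have R_sym': "R$x$y = R$y$x" for x y unfolding R_def by (simp add: mult_ac)
  define D where "D = A w - MA"
  define DS where "DS S = (\<chi> l j. if j \<in> S then D$l$j else 0)" for S :: "'p set"
  define X where "X = (\<lambda>j t. \<Sum>l\<in>UNIV. A w $ l $ j * \<phi> l t)"
  define \<mu> where "\<mu> = (\<lambda>j t. \<Sum>l\<in>UNIV. MA $ l $ j * \<phi> l t)"
  define cc where "cc j j' = (\<Sum>l\<in>UNIV. D$l$j * (\<Sum>l'\<in>UNIV. Sc$l$l' * D$l'$j' * R$j'$j))" for j j'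
  have hfun: "(\<lambda>j t. hatX S X \<mu> j t - \<mu> j t) = fn (DS S)" for S
    unfolding hatX_def X_def \<mu>_def fn_def DS_def D_def
    by (intro ext) (simp add: sum_subtractf[symmetric] left_diff_distrib)
  have quadform: "Y \<bullet> (Sc ** Y ** R) = (\<Sum>j\<in>UNIV. \<Sum>j'\<in>UNIV. \<Sum>l\<in>UNIV. Y$l$j * (\<Sum>l'\<in>UNIV. Sc$l$l' * Y$l'$j' * R$j'$j))" for Y :: "real^'p^'m"
  proof -
    have "Y \<bullet> (Sc ** Y ** R) = (\<Sum>l\<in>UNIV. \<Sum>j\<in>UNIV. \<Sum>j'\<in>UNIV. Y$l$j * (\<Sum>l'\<in>UNIV. Sc$l$l' * Y$l'$j' * R$j'$j))"
      by (simp add: inner_mat matrix_matrix_mult_def sum_distrib_left sum_distrib_right)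
    also have "\<dots> = (\<Sum>j\<in>UNIV. \<Sum>l\<in>UNIV. \<Sum>j'\<in>UNIV. Y$l$j * (\<Sum>l'\<in>UNIV. Sc$l$l' * Y$l'$j' * R$j'$j))"
      by (rule sum.swap)
    also have "\<dots> = (\<Sum>j\<in>UNIV. \<Sum>j'\<in>UNIV. \<Sum>l\<in>UNIV. Y$l$j * (\<Sum>l'\<in>UNIV. Sc$l$l' * Y$l'$j' * R$j'$j))"
      by (rule sum.cong[OF refl], rule sum.swap)
    finally show ?thesis .
  qed
  have restr: "(\<Sum>j\<in>UNIV. if j \<in> S then f j else 0) = sum f S" for S and f :: "'p \<Rightarrow> real"
    using sum.inter_restrict[of UNIV f S] by simp
  have FS: "fMMD2 a b \<psi> \<pi> ?N (hatX S X \<mu>) \<mu> = (\<Sum>j\<in>S. \<Sum>j'\<in>S. cc j j')" for S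
  proof -
    have "fMMD2 a b \<psi> \<pi> ?N (hatX S X \<mu>) \<mu> = (\<Sum>i=1..?N. inverse (\<pi> i) * (DS S \<bullet> c i)\<^sup>2)"
      unfolding fMMD2_def hfun by (intro sum.cong refl) (simp add: ip_fn_psi)
    also have "\<dots> = DS S \<bullet> (Sc ** DS S ** R)" by (rule quad[OF Ginv Scinv(1) Rinv])
    also have "\<dots> = (\<Sum>j\<in>UNIV. \<Sum>j'\<in>UNIV. if j \<in> S then (if j' \<in> S then cc j j' else 0) else 0)"
      unfolding quadform cc_def DS_def by (intro sum.cong refl) simp
    also have "\<dots> = (\<Sum>j\<in>UNIV. if j \<in> S then (\<Sum>j'\<in>UNIV. if j' \<in> S then cc j j' else 0) else 0)"
      by (intro sum.cong refl) auto
    also have "\<dots> = (\<Sum>j\<in>S. \<Sum>j'\<in>S. cc j j')"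
      by (simp only: restr)
    finally show ?thesis .
  qed
  have ccsym: "cc i j = cc j i" for i j
  proof -
    have pt: "D$l$i * (Sc$l$l' * D$l'$j * R$j$i) = D$l'$j * (Sc$l'$l * D$l$i * R$i$j)" for l l'
      using Sc_sym'[of l l'] R_sym'[of j i] by (simp add: mult_ac)
    have "cc i j = (\<Sum>l\<in>UNIV. \<Sum>l'\<in>UNIV. D$l$i * (Sc$l$l' * D$l'$j * R$j$i))"
      by (simp only: cc_def sum_distrib_left)
    also have "\<dots> = (\<Sum>l'\<in>UNIV. \<Sum>l\<in>UNIV. D$l$i * (Sc$l$l' * D$l'$j * R$j$i))"
      by (rule sum.swap)
    also have "\<dots> = (\<Sum>l'\<in>UNIV. \<Sum>l\<in>UNIV. D$l'$j * (Sc$l'$l * D$l$i * R$i$j))"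
      by (intro sum.cong refl) (rule pt)
    also have "\<dots> = cc j i"
      by (simp only: cc_def sum_distrib_left)
    finally show ?thesis .
  qed
  have "shapley a b \<psi> \<pi> ?N k X \<mu> = (\<Sum>j\<in>UNIV. cc k j)"
    unfolding shapley_def by (rule shapley_quad[where F="\<lambda>S. fMMD2 a b \<psi> \<pi> ?N (hatX S X \<mu>) \<mu>"]) (use ccsym FS in auto)
  also have "\<dots> = (\<Sum>j\<in>UNIV. (1 / lamrow j) * (vrow j $ k) *
         ((\<chi> l. A w $ l $ k - MA $ l $ k) \<bullet>
          (matrix_inv Scol *v ((A w - MA) *v vrow j))))"
  proof -
    define T where "T j' l l' q = inverse (lamrow q) * vrow q $ k * (D$l$k * (Sc$l$l' * (D$l'$j' * vrow q $ j')))" for j' l l' q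
    have "(\<Sum>j\<in>UNIV. cc k j) = (\<Sum>j'\<in>UNIV. \<Sum>l\<in>UNIV. \<Sum>l'\<in>UNIV. \<Sum>q\<in>UNIV. T j' l l' q)"
      unfolding cc_def R_def T_def vec_lambda_beta sum_distrib_left
      by (intro sum.cong refl) (simp add: mult_ac)
    also have "\<dots> = (\<Sum>q\<in>UNIV. \<Sum>l\<in>UNIV. \<Sum>l'\<in>UNIV. \<Sum>j'\<in>UNIV. T j' l l' q)"
      by (rule sum4_swap)
    also have "\<dots> = (\<Sum>j\<in>UNIV. (1 / lamrow j) * (vrow j $ k) *
         ((\<chi> l. A w $ l $ k - MA $ l $ k) \<bullet> (Sc *v (D *v vrow j))))"
    proof (rule sum.cong[OF refl])
      fix q
      have "(\<chi> l. A w $ l $ k - MA $ l $ k) = (\<chi> l. D $ l $ k)" unfolding D_def by simp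
      then show "(\<Sum>l\<in>UNIV. \<Sum>l'\<in>UNIV. \<Sum>j'\<in>UNIV. T j' l l' q) = (1 / lamrow q) * (vrow q $ k) *
         ((\<chi> l. A w $ l $ k - MA $ l $ k) \<bullet> (Sc *v (D *v vrow q)))"
        unfolding T_def by (simp add: inner_vec_def matrix_vector_mult_def sum_distrib_left divide_inverse)
    qed
    finally show ?thesis unfolding Sc_def D_def .
  qed
  finally show "shapley a b \<psi> \<pi> ?N k
      (\<lambda>j t. \<Sum>l\<in>UNIV. A w $ l $ j * \<phi> l t)
      (\<lambda>j t. \<Sum>l\<in>UNIV. MA $ l $ j * \<phi> l t)
    = (\<Sum>j\<in>UNIV. (1 / lamrow j) * (vrow j $ k) *
         ((\<chi> l. A w $ l $ k - MA $ l $ k) \<bullet>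
          (matrix_inv Scol *v ((A w - MA) *v vrow j))))"
    unfolding X_def \<mu>_def .
qed



end
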